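(* Let $\tau$ be a point of the upper half plane, and let $Q_1,Q_2\in M_2(\mathbb Z)$ be symmetric positive definite matrices of determinant $N$. Put $H_i=(\operatorname{Im}(Q_i\tau))^{-1}$ and $\mathscr R_i=\{M\in\operatorname{End}(X_{Q_i\tau}):{}^t\bar MH_i=H_iM^\iota\}$ for $i=1,2$. Let $S=\mathbb Z$ or $\mathbb Q$ and suppose there is $A\in GL_2(S)$ with $Q_2=(\det A)^{-1}AQ_1\,{}^tA$. Then $M\mapsto AMA^{-1}$ is an $S$-algebra isomorphism $\operatorname{End}_S(X_{Q_1\tau})\to\operatorname{End}_S(X_{Q_2\tau})$, and it induces an $S$-algebra isomorphism $\mathscr R_1\otimes_{\mathbb Z}S\to\mathscr R_2\otimes_{\mathbb Z}S$.
   Context: For $z$ in the Siegel upper half space $\mathfrak h_2=\{z\in M_2(\mathbb C):{}^tz=z,\operatorname{Im}z>0\}$: $L_z=[z,\mathbf 1_2]\mathbb Z^4\subset\mathbb C^2$, $X_z=\mathbb C^2/L_z$; $\operatorname{End}(X_z)=\operatorname{End}_{\mathbb Z}(X_z)$ is identified with the ring of $M\in M_2(\mathbb C)$ with $ML_z\subseteq L_z$, and $\operatorname{End}_{\mathbb Q}(X_z)=\operatorname{End}(X_z)\otimes\mathbb Q$. For a $2\times2$ matrix $M$, $M^\iota=\operatorname{tr}(M)\mathbf 1_2-M$ and $\bar M$ is entrywise complex conjugation. $N$ is a prime. *)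

theory Defs
  imports "HOL-Analysis.Analysis" "HOL-Computational_Algebra.Primes"
begin

datatype coeff_ring = SZ | SQ

definition int_cmat :: "int^2^2 \<Rightarrow> complex^2^2" where
  "int_cmat Q = (\<chi> i j. of_int (Q$i$j))"

definition int_rmat :: "int^2^2 \<Rightarrow> real^2^2" where
  "int_rmat Q = (\<chi> i j. of_int (Q$i$j))"

definition rat_cmat :: "rat^2^2 \<Rightarrow> complex^2^2" where
  "rat_cmat A = (\<chi> i j. of_rat (A$i$j))"

definition int_ratmat :: "int^2^2 \<Rightarrow> rat^2^2" where
  "int_ratmat Q = (\<chi> i j. of_int (Q$i$j))"

definition int_cvec :: "int^2 \<Rightarrow> complex^2" where
  "int_cvec a = (\<chi> i. of_int (a$i))"

definition mat_scal :: "int^2^2 \<Rightarrow> complex \<Rightarrow> complex^2^2" where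
  "mat_scal Q \<tau> = (\<chi> i j. \<tau> * of_int (Q$i$j))"

definition sym_pos_def :: "int^2^2 \<Rightarrow> bool" where
  "sym_pos_def Q \<longleftrightarrow> transpose Q = Q \<and>
     (\<forall>x::real^2. x \<noteq> 0 \<longrightarrow> x \<bullet> (int_rmat Q *v x) > 0)"

definition lattice :: "complex^2^2 \<Rightarrow> (complex^2) set" where
  "lattice z = {z *v int_cvec a + int_cvec b | a b. True}"

definition End_Z :: "complex^2^2 \<Rightarrow> (complex^2^2) set" where
  "End_Z z = {M. \<forall>v \<in> lattice z. M *v v \<in> lattice z}"

definition scale_mat :: "complex \<Rightarrow> complex^2^2 \<Rightarrow> complex^2^2" where
  "scale_mat c M = (\<chi> i j. c * M$i$j)"

text \<open>X \<otimes>_Z S, realised inside M_2(C) (X a torsion-free subgroup of M_2(C))\<close>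
definition tensorS :: "coeff_ring \<Rightarrow> (complex^2^2) set \<Rightarrow> (complex^2^2) set" where
  "tensorS S X = (case S of SZ \<Rightarrow> X
     | SQ \<Rightarrow> {M. \<exists>n::nat. n > 0 \<and> scale_mat (of_nat n) M \<in> X})"

definition End_S :: "coeff_ring \<Rightarrow> complex^2^2 \<Rightarrow> (complex^2^2) set" where
  "End_S S z = tensorS S (End_Z z)"

definition Im_mat :: "complex^2^2 \<Rightarrow> real^2^2" where
  "Im_mat z = (\<chi> i j. Im (z$i$j))"

definition Hmat :: "complex^2^2 \<Rightarrow> complex^2^2" where
  "Hmat z = (\<chi> i j. complex_of_real (matrix_inv (Im_mat z) $i$j))"

definition iota :: "complex^2^2 \<Rightarrow> complex^2^2" where
  "iota M = mat (trace M) - M"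

definition cnj_mat :: "complex^2^2 \<Rightarrow> complex^2^2" where
  "cnj_mat M = (\<chi> i j. cnj (M$i$j))"

definition R_ring :: "complex^2^2 \<Rightarrow> (complex^2^2) set" where
  "R_ring z = {M \<in> End_Z z. transpose (cnj_mat M) ** Hmat z = Hmat z ** iota M}"

definition scalars :: "coeff_ring \<Rightarrow> rat set" where
  "scalars S = (case S of SZ \<Rightarrow> \<int> | SQ \<Rightarrow> UNIV)"

definition GL2 :: "coeff_ring \<Rightarrow> (rat^2^2) set" where
  "GL2 S = {A. (\<forall>i j. A$i$j \<in> scalars S) \<and> det A \<noteq> 0 \<and>
               inverse (det A) \<in> scalars S}"

definition S_alg_iso :: "coeff_ring \<Rightarrow> (complex^2^2 \<Rightarrow> complex^2^2)
    \<Rightarrow> (complex^2^2) set \<Rightarrow> (complex^2^2) set \<Rightarrow> bool" where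
  "S_alg_iso S f X Y \<longleftrightarrow> bij_betw f X Y \<and> f (mat 1) = mat 1 \<and>
     (\<forall>x\<in>X. \<forall>y\<in>X. f (x + y) = f x + f y \<and> f (x ** y) = f x ** f y) \<and>
     (\<forall>c\<in>scalars S. \<forall>x\<in>X. f (scale_mat (of_rat c) x) = scale_mat (of_rat c) (f x))"

end

theory Submission imports Defs begin


lemma mat2_eq: "(A::'a^2^2) = B \<longleftrightarrow> A$1$1 = B$1$1 \<and> A$1$2 = B$1$2 \<and> A$2$1 = B$2$1 \<and> A$2$2 = B$2$2"
  by (auto simp: vec_eq_iff forall_2)

definition adj2 :: "'a::comm_ring_1^2^2 \<Rightarrow> 'a^2^2" where
  "adj2 A = (\<chi> i j. if i = 1 then (if j = 1 then A$2$2 else - A$1$2) else (if j = 1 then - A$2$1 else A$1$1))"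

lemma adj2_nth[simp]: "adj2 A $1$1 = A$2$2" "adj2 A $1$2 = - A$1$2" "adj2 A $2$1 = - A$2$1" "adj2 A $2$2 = A$1$1"
  by (simp_all add: adj2_def)

lemma mult2_nth[simp]: "((A::'a::semiring_1^2^2) ** B) $ i $ j = A$i$1 * B$1$j + A$i$2 * B$2$j"
  by (simp add: matrix_matrix_mult_def sum_2)

lemma mat2_nth[simp]: "(mat c :: 'a::zero^2^2) $1$1 = c" "(mat c :: 'a::zero^2^2) $2$2 = c" "(mat c :: 'a::zero^2^2) $1$2 = 0" "(mat c :: 'a::zero^2^2) $2$1 = 0"
  by (simp_all add: mat_def)

lemma inv2: fixes A :: "'a::field^2^2" assumes "det A \<noteq> 0"
  shows "matrix_inv A = (\<chi> i j. adj2 A $i$j / det A)"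
proof -
  define D where "D = det A"
  have D: "D \<noteq> 0" "D = A$1$1 * A$2$2 - A$1$2 * A$2$1" using assms by (simp_all add: D_def det_2)
  define I where "I = (\<chi> i j. adj2 A $i$j / D)"
  have I: "A ** I = mat 1" "I ** A = mat 1"
    by (simp_all add: mat2_eq I_def divide_simps D(1)) (simp_all add: D(2) algebra_simps)
  have "A ** matrix_inv A = mat 1 \<and> matrix_inv A ** A = mat 1"
    unfolding matrix_inv_def by (rule someI[of _ I]) (use I in auto)
  then have "matrix_inv A = matrix_inv A ** (A ** I)" using I by simp
  also have "\<dots> = I" by (simp only: matrix_mul_assoc \<open>_ \<and> _\<close>[THEN conjunct2] matrix_mul_lid)
  finally show ?thesis unfolding I_def D_def .
qed


lemma transpose2_nth[simp]: "transpose A $ i $ j = A $ j $ i" by (simp add: transpose_def)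

lemma key_id: fixes B P Q :: "'a::field^2^2"
  assumes "det B \<noteq> 0" "Q = (\<chi> i j. inverse (det B) * (B ** P ** transpose B)$i$j)"
  shows "Q ** transpose (adj2 B) = B ** P"
proof -
  define D where "D = det B"
  have D: "D \<noteq> 0" "D = B$1$1 * B$2$2 - B$1$2 * B$2$1" using assms by (simp_all add: D_def det_2)
  show ?thesis unfolding assms(2) D_def[symmetric]
    by (simp add: mat2_eq field_simps D(1)) (simp_all add: D(2) algebra_simps)
qed


lemma lattice_map:
  fixes B :: "rat^2^2" and P Q :: "int^2^2" and d :: nat
  assumes detB: "det B \<noteq> 0" and dB: "\<forall>i j. of_nat d * B$i$j \<in> \<int>"
    and rel: "int_ratmat Q = (\<chi> i j. inverse (det B) * (B ** int_ratmat P ** transpose B)$i$j)"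
    and v: "v \<in> lattice (mat_scal P \<tau>)"
  shows "of_nat d *s (rat_cmat B *v v) \<in> lattice (mat_scal Q \<tau>)"
proof -
  obtain a b where v: "v = mat_scal P \<tau> *v int_cvec a + int_cvec b" using v by (auto simp: lattice_def)
  have "\<forall>i j. \<exists>z::int. of_int z = of_nat d * B$i$j" using dB by (metis Ints_cases)
  then obtain k where k: "\<And>i j. of_int (k i j) = of_nat d * B$i$j" by metis
  have kc: "\<And>i j. (of_int (k i j)::complex) = of_nat d * of_rat (B$i$j)"
    by (metis k of_rat_of_int_eq of_rat_mult of_rat_of_nat_eq)
  define K where "K = (\<chi> i j. k i j)"
  have ID: "int_ratmat Q ** transpose (adj2 B) = B ** int_ratmat P" by (rule key_id[OF detB rel])
  have E: "\<And>i l. (of_rat ((int_ratmat Q ** transpose (adj2 B))$i$l)::complex) = of_rat ((B ** int_ratmat P)$i$l)"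
    using ID by simp
  have E2: "\<And>i l. of_int (Q$i$1) * of_rat ((transpose (adj2 B))$1$l) + of_int (Q$i$2) * of_rat ((transpose (adj2 B))$2$l)
       = of_rat (B$i$1) * of_int (P$1$l) + (of_rat (B$i$2) * of_int (P$2$l)::complex)"
    using E by (simp add: int_ratmat_def of_rat_add of_rat_mult)
  have E3: "of_int (Q$1$1) * of_rat (B$2$2) - of_int (Q$1$2) * of_rat (B$1$2) = of_rat (B$1$1) * of_int (P$1$1) + (of_rat (B$1$2) * of_int (P$2$1)::complex)"
    "- of_int (Q$1$1) * of_rat (B$2$1) + of_int (Q$1$2) * of_rat (B$1$1) = of_rat (B$1$1) * of_int (P$1$2) + (of_rat (B$1$2) * of_int (P$2$2)::complex)"
    "of_int (Q$2$1) * of_rat (B$2$2) - of_int (Q$2$2) * of_rat (B$1$2) = of_rat (B$2$1) * of_int (P$1$1) + (of_rat (B$2$2) * of_int (P$2$1)::complex)"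
    "- of_int (Q$2$1) * of_rat (B$2$1) + of_int (Q$2$2) * of_rat (B$1$1) = of_rat (B$2$1) * of_int (P$1$2) + (of_rat (B$2$2) * of_int (P$2$2)::complex)"
    using E2[of 1 1] E2[of 1 2] E2[of 2 1] E2[of 2 2] by (simp_all add: of_rat_minus)
  have "of_nat d *s (rat_cmat B *v v) = mat_scal Q \<tau> *v int_cvec (transpose (adj2 K) *v a) + int_cvec (K *v b)"
    unfolding v
    apply (simp add: vec_eq_iff forall_2 matrix_vector_mult_def sum_2 vector_scalar_mult_def rat_cmat_def
       mat_scal_def int_cvec_def K_def kc)
    using E3 apply algebra
    done
  then show ?thesis by (auto simp: lattice_def)
qed


lemma cnj_of_rat[simp]: "cnj (of_rat r) = of_rat r"
  by (cases r) (simp add: of_rat_rat)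
lemma add2_rdistrib: "((A::'a::semiring_1^2^2) + B) ** (C::'a^2^2) = A ** C + B ** C"
  by (rule iffD2[OF mat2_eq]) (simp add: algebra_simps)
lemma diff2_ldistrib: "(A::'a::ring_1^2^2) ** (B - (C::'a^2^2)) = A ** B - A ** C"
  by (rule iffD2[OF mat2_eq]) (simp add: algebra_simps)
lemma diff2_rdistrib: "((A::'a::ring_1^2^2) - B) ** (C::'a^2^2) = A ** C - B ** C"
  by (rule iffD2[OF mat2_eq]) (simp add: algebra_simps)
lemma mat2_comm: "mat c ** (A::'a::comm_semiring_1^2^2) = A ** mat c"
  by (simp add: mat2_eq algebra_simps)
lemma mat2_mat: "mat a ** (mat b::'a::comm_semiring_1^2^2) = mat (a*b)"
  by (simp add: mat2_eq)
lemma chi_scale: "(\<chi> i j. c * (X::'a::comm_semiring_1^2^2)$i$j) = mat c ** X"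
  by (simp add: mat2_eq)
lemma scale_mat_eq: "scale_mat c X = mat c ** X"
  by (simp add: scale_mat_def chi_scale)

lemma inv_unique: assumes "(A::'a::semiring_1^'n^'n) ** B = mat 1" "B ** A = mat 1"
  shows "matrix_inv A = B"
proof -
  have "A ** matrix_inv A = mat 1 \<and> matrix_inv A ** A = mat 1"
    unfolding matrix_inv_def by (rule someI[of _ B]) (use assms in auto)
  then have "matrix_inv A = matrix_inv A ** (A ** B)" using assms by simp
  also have "\<dots> = B" by (simp only: matrix_mul_assoc \<open>_ \<and> _\<close>[THEN conjunct2] matrix_mul_lid)
  finally show ?thesis .
qed

lemma inv_mult: assumes "det (A::'a::field^'n^'n) \<noteq> 0"
  shows "A ** matrix_inv A = mat 1" "matrix_inv A ** A = mat 1"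
proof -
  have "invertible A" using assms invertible_det_nz by blast
  then obtain B where "A ** B = mat 1" "B ** A = mat 1" unfolding invertible_def by blast
  then show "A ** matrix_inv A = mat 1" "matrix_inv A ** A = mat 1" using inv_unique by metis+
qed

lemma det_inv: assumes "det (A::'a::field^'n^'n) \<noteq> 0" shows "det (matrix_inv A) = inverse (det A)"
proof -
  have "det A * det (matrix_inv A) = 1" using inv_mult(1)[OF assms] by (metis det_I det_mul)
  then show ?thesis using assms by (simp add: field_simps)
qed

lemma inv_inv: assumes "det (A::'a::field^'n^'n) \<noteq> 0" shows "matrix_inv (matrix_inv A) = A"
  using inv_unique inv_mult[OF assms] by metis

lemma det_inv_nz: assumes "det (A::'a::field^'n^'n) \<noteq> 0" shows "det (matrix_inv A) \<noteq> 0"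
  using det_inv[OF assms] assms by simp

lemma rat_cmat_mult: "rat_cmat (A ** B) = rat_cmat A ** rat_cmat B"
  by (simp add: mat2_eq rat_cmat_def of_rat_add of_rat_mult)
lemma rat_cmat_mat: "rat_cmat (mat c) = mat (of_rat c)"
  by (simp add: mat2_eq rat_cmat_def)
lemma rat_cmat_transpose: "rat_cmat (transpose A) = transpose (rat_cmat A)"
  by (simp add: mat2_eq rat_cmat_def)
lemma cnj_rat_cmat: "cnj_mat (rat_cmat A) = rat_cmat A"
  by (simp add: mat2_eq rat_cmat_def cnj_mat_def)
lemma cnj_mult: "cnj_mat (A ** B) = cnj_mat A ** cnj_mat B"
  by (simp add: mat2_eq cnj_mat_def)
lemma cnj_transpose: "cnj_mat (transpose A) = transpose (cnj_mat A)"
  by (simp add: mat2_eq cnj_mat_def)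
lemma int_cmat_rat: "rat_cmat (int_ratmat P) = int_cmat P"
  by (simp add: mat2_eq rat_cmat_def int_ratmat_def int_cmat_def)

lemma rat_cmat_inv: assumes "det A \<noteq> 0"
  shows "rat_cmat A ** rat_cmat (matrix_inv A) = mat 1" "rat_cmat (matrix_inv A) ** rat_cmat A = mat 1"
  by (simp_all add: rat_cmat_mult[symmetric] inv_mult[OF assms] rat_cmat_mat)

lemma rel_inv:
  fixes A :: "rat^2^2" and P Q :: "rat^2^2"
  assumes d: "det A \<noteq> 0" and rel: "Q = (\<chi> i j. inverse (det A) * (A ** P ** transpose A)$i$j)"
  shows "P = (\<chi> i j. inverse (det (matrix_inv A)) * (matrix_inv A ** Q ** transpose (matrix_inv A))$i$j)"
proof -
  let ?Ai = "matrix_inv A"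
  have 1: "?Ai ** A = mat 1" "transpose A ** transpose ?Ai = mat 1"
    using inv_mult[OF d] by (simp_all add: matrix_transpose_mul[symmetric])
  have "?Ai ** Q ** transpose ?Ai = ?Ai ** (mat (inverse (det A)) ** (A ** P ** transpose A)) ** transpose ?Ai"
    unfolding rel chi_scale ..
  also have "\<dots> = mat (inverse (det A)) ** ((?Ai ** A) ** P ** (transpose A ** transpose ?Ai))"
  proof -
    have c1: "?Ai ** mat (inverse (det A)) = mat (inverse (det A)) ** ?Ai" by (simp add: mat2_comm)
    show ?thesis by (simp only: matrix_mul_assoc c1)
  qed
  also have "\<dots> = mat (inverse (det A)) ** P" by (simp add: 1)
  finally have "?Ai ** Q ** transpose ?Ai = mat (inverse (det A)) ** P" .
  then show ?thesis unfolding chi_scale det_inv[OF d]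
    using d by (simp add: matrix_mul_assoc mat2_mat)
qed


lemma iso_general:
  fixes A :: "rat^2^2"
  assumes d: "det A \<noteq> 0"
    and XY: "\<forall>M\<in>X. rat_cmat A ** M ** rat_cmat (matrix_inv A) \<in> Y"
    and YX: "\<forall>M\<in>Y. rat_cmat (matrix_inv A) ** M ** rat_cmat A \<in> X"
  shows "S_alg_iso S (\<lambda>M. rat_cmat A ** M ** rat_cmat (matrix_inv A)) X Y"
proof -
  let ?A = "rat_cmat A" and ?B = "rat_cmat (matrix_inv A)"
  have AB: "?A ** ?B = mat 1" "?B ** ?A = mat 1" using rat_cmat_inv[OF d] by auto
  have AB': "?A ** (?B ** Z) = Z" "?B ** (?A ** Z) = Z" for Z :: "complex^2^2"
    by (simp_all add: matrix_mul_assoc AB)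
  have bij: "bij_betw (\<lambda>M. ?A ** M ** ?B) X Y"
  proof (rule bij_betw_byWitness[where f'="\<lambda>M. ?B ** M ** ?A"])
    show "\<forall>a\<in>X. ?B ** (?A ** a ** ?B) ** ?A = a"
      by (simp add: matrix_mul_assoc[symmetric] AB' AB)
    show "\<forall>a\<in>Y. ?A ** (?B ** a ** ?A) ** ?B = a"
      by (simp add: matrix_mul_assoc[symmetric] AB' AB)
  qed (use XY YX in auto)
  show ?thesis unfolding S_alg_iso_def
  proof (intro conjI ballI bij)
    show "?A ** mat 1 ** ?B = mat 1" using AB by simp
  next
    fix x y assume "x \<in> X" "y \<in> X"
    show "?A ** (x + y) ** ?B = ?A ** x ** ?B + ?A ** y ** ?B"
      by (simp add: matrix_add_ldistrib add2_rdistrib)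
    show "?A ** (x ** y) ** ?B = ?A ** x ** ?B ** (?A ** y ** ?B)"
      by (simp add: matrix_mul_assoc[symmetric] AB')
  next
    fix c x
    have c1: "?A ** mat (of_rat c) = mat (of_rat c) ** ?A" by (simp add: mat2_comm)
    show "?A ** scale_mat (of_rat c) x ** ?B = scale_mat (of_rat c) (?A ** x ** ?B)"
      unfolding scale_mat_eq by (simp only: matrix_mul_assoc c1)
  qed
qed

definition rc :: "real^2^2 \<Rightarrow> complex^2^2" where "rc X = (\<chi> i j. of_real (X$i$j))"

lemma rc_mult: "rc (A ** B) = rc A ** rc B" by (simp add: mat2_eq rc_def)
lemma rc_mat: "rc (mat c) = mat (of_real c)" by (simp add: mat2_eq rc_def)

lemma R_char:
  fixes P :: "int^2^2"
  assumes t: "Im \<tau> > 0" and dP: "det P \<noteq> 0"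
  shows "(transpose (cnj_mat M) ** Hmat (mat_scal P \<tau>) = Hmat (mat_scal P \<tau>) ** iota M) \<longleftrightarrow>
         (int_cmat P ** transpose (cnj_mat M) = iota M ** int_cmat P)"
proof -
  define R where "R = Im_mat (mat_scal P \<tau>)"
  have R: "R = mat (Im \<tau>) ** int_rmat P"
    by (simp add: R_def mat2_eq Im_mat_def mat_scal_def int_rmat_def)
  have "det R = Im \<tau> * Im \<tau> * of_int (det P)"
    by (simp add: R det_2 int_rmat_def algebra_simps)
  then have dR: "det R \<noteq> 0" using t dP by simp
  define H where "H = rc (matrix_inv R)"
  have HR: "H ** rc R = mat 1" "rc R ** H = mat 1"
    unfolding H_def rc_mult[symmetric] inv_mult[OF dR] rc_mat by simp_all
  have Hm: "Hmat (mat_scal P \<tau>) = H" by (simp add: Hmat_def H_def rc_def R_def)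
  have rcR: "rc R = mat (of_real (Im \<tau>)) ** int_cmat P"
    by (simp add: R mat2_eq rc_def int_rmat_def int_cmat_def)
  have gen: "(X ** H = H ** Y) \<longleftrightarrow> (rc R ** X = Y ** rc R)" for X Y :: "complex^2^2"
  proof
    assume e: "X ** H = H ** Y"
    have "rc R ** X = rc R ** (X ** H) ** rc R" by (simp add: matrix_mul_assoc[symmetric] HR)
    also have "\<dots> = Y ** rc R" by (simp add: e matrix_mul_assoc HR)
    finally show "rc R ** X = Y ** rc R" .
  next
    assume e: "rc R ** X = Y ** rc R"
    have "X ** H = H ** (rc R ** X) ** H" by (simp add: matrix_mul_assoc HR)
    also have "\<dots> = H ** Y" by (simp add: e matrix_mul_assoc[symmetric] HR)
    finally show "X ** H = H ** Y" .
  qed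
  have t0: "(of_real (Im \<tau>)::complex) \<noteq> 0" using t by simp
  have canc: "(mat (of_real (Im \<tau>)) ** X = mat (of_real (Im \<tau>)) ** Y) \<longleftrightarrow> X = Y" for X Y :: "complex^2^2"
    using t0 by (auto simp: mat2_eq)
  have e2: "Y ** (mat (of_real (Im \<tau>)) ** int_cmat P) = mat (of_real (Im \<tau>)) ** (Y ** int_cmat P)" for Y :: "complex^2^2"
    by (metis matrix_mul_assoc mat2_comm)
  show ?thesis unfolding Hm gen rcR e2
    by (simp only: matrix_mul_assoc[symmetric] canc)
qed

lemma iota_conj:
  fixes A B M :: "complex^2^2"
  assumes AB: "A ** B = mat 1" "B ** A = mat 1"
  shows "iota (A ** M ** B) = A ** iota M ** B"
proof -
  have tr: "trace (A ** M ** B) = trace M"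
    using trace_mul_sym[of "A ** M" B] by (simp add: matrix_mul_assoc AB)
  have "A ** mat (trace M) ** B = mat (trace M)"
    by (metis AB(1) matrix_mul_assoc mat2_comm matrix_mul_lid)
  then show ?thesis unfolding iota_def tr
    by (simp add: diff2_ldistrib diff2_rdistrib)
qed

lemma R_transfer:
  fixes B :: "rat^2^2" and P Q :: "int^2^2"
  assumes d: "det B \<noteq> 0"
    and rel: "int_ratmat Q = (\<chi> i j. inverse (det B) * (B ** int_ratmat P ** transpose B)$i$j)"
    and h: "int_cmat P ** transpose (cnj_mat M) = iota M ** int_cmat P"
  shows "int_cmat Q ** transpose (cnj_mat (rat_cmat B ** M ** rat_cmat (matrix_inv B)))
       = iota (rat_cmat B ** M ** rat_cmat (matrix_inv B)) ** int_cmat Q"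
proof -
  let ?A = "rat_cmat B" and ?Bi = "rat_cmat (matrix_inv B)" and ?c = "mat (of_rat (inverse (det B))) :: complex^2^2"
  let ?P = "int_cmat P" and ?Mb = "transpose (cnj_mat M)"
  have AB: "?A ** ?Bi = mat 1" "?Bi ** ?A = mat 1" using rat_cmat_inv[OF d] by auto
  have ABt: "transpose ?A ** transpose ?Bi = mat 1"
    by (simp add: matrix_transpose_mul[symmetric] AB)
  have Qc: "int_cmat Q = ?c ** (?A ** ?P ** transpose ?A)"
    unfolding int_cmat_rat[symmetric] rel chi_scale
    by (simp add: rat_cmat_mult rat_cmat_mat rat_cmat_transpose int_cmat_rat)
  have cn: "transpose (cnj_mat (?A ** M ** ?Bi)) = transpose ?Bi ** ?Mb ** transpose ?A"
    by (simp add: cnj_mult cnj_rat_cmat matrix_transpose_mul matrix_mul_assoc)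
  have "int_cmat Q ** transpose (cnj_mat (?A ** M ** ?Bi))
      = ?c ** ?A ** ?P ** (transpose ?A ** transpose ?Bi) ** ?Mb ** transpose ?A"
    unfolding Qc cn by (simp only: matrix_mul_assoc)
  also have "\<dots> = ?c ** ?A ** (?P ** ?Mb) ** transpose ?A"
    by (simp only: ABt matrix_mul_rid matrix_mul_assoc)
  also have "\<dots> = ?c ** ?A ** (iota M ** ?P) ** transpose ?A" by (simp only: h)
  also have "\<dots> = ?A ** iota M ** (?Bi ** ?c ** ?A) ** ?P ** transpose ?A"
  proof -
    have e0: "?Bi ** ?c = ?c ** ?Bi" by (simp only: mat2_comm)
    have e00: "?Bi ** ?c ** ?A = ?c" unfolding e0 by (simp only: matrix_mul_assoc[symmetric] AB matrix_mul_rid)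
    have e1: "X ** ?Bi ** ?c ** ?A = X ** ?c" for X :: "complex^2^2"
      using e00 by (simp only: matrix_mul_assoc[symmetric])
    have e3: "?c ** ?A ** iota M = ?A ** iota M ** ?c" by (simp only: matrix_mul_assoc[symmetric] mat2_comm[of _ "?A ** iota M"])
    show ?thesis by (simp only: matrix_mul_assoc e1 e3)
  qed
  also have "\<dots> = iota (?A ** M ** ?Bi) ** int_cmat Q"
    unfolding iota_conj[OF AB] Qc by (simp only: matrix_mul_assoc)
  finally show ?thesis .
qed

lemma cond_scale:
  fixes X :: "complex^2^2"
  assumes "int_cmat P ** transpose (cnj_mat X) = iota X ** int_cmat P"
  shows "int_cmat P ** transpose (cnj_mat (scale_mat (of_nat m) X)) = iota (scale_mat (of_nat m) X) ** int_cmat P"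
proof -
  have 1: "transpose (cnj_mat (scale_mat (of_nat m) X)) = mat (of_nat m) ** transpose (cnj_mat X)"
    by (simp add: mat2_eq cnj_mat_def scale_mat_def)
  have 2: "iota (scale_mat (of_nat m) X) = mat (of_nat m) ** iota X"
    by (simp add: mat2_eq iota_def scale_mat_def trace_def sum_2 algebra_simps)
  show ?thesis unfolding 1 2
    by (metis assms matrix_mul_assoc mat2_comm)
qed

lemma scalars_simps[simp]: "scalars SZ = \<int>" "scalars SQ = UNIV"
  by (simp_all add: scalars_def)

lemma GL2_det: "A \<in> GL2 S \<Longrightarrow> det A \<noteq> 0" by (simp add: GL2_def)

lemma GL2_inv: assumes A: "A \<in> GL2 S" shows "matrix_inv A \<in> GL2 S"
proof -
  have d: "det A \<noteq> 0" using GL2_det[OF A] .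
  show ?thesis
  proof (cases S)
    case SQ then show ?thesis using det_inv_nz[OF d] by (simp add: GL2_def)
  next
    case SZ
    have ent: "A$i$j \<in> \<int>" for i j using A SZ by (simp add: GL2_def)
    have idet: "inverse (det A) \<in> \<int>" using A SZ by (simp add: GL2_def)
    have detZ: "det A \<in> \<int>" using ent by (simp add: det_2)
    have "adj2 A $ i $ j \<in> \<int>" for i j
      using ent exhaust_2[of i] exhaust_2[of j] by auto
    then have "matrix_inv A $ i $ j \<in> \<int>" for i j
      using idet by (simp add: inv2[OF d] divide_inverse)
    then show ?thesis using SZ det_inv_nz[OF d] det_inv[OF d] idet detZ d
      by (simp add: GL2_def)
  qed
qed

lemma rat_denom: "\<exists>n::nat. n > 0 \<and> of_nat n * (r::rat) \<in> \<int>"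
proof -
  obtain a b where q: "quotient_of r = (a, b)" by (cases "quotient_of r")
  have b: "b > 0" using quotient_of_denom_pos[OF q] .
  have "r = of_int a / of_int b" using quotient_of_div[OF q] .
  then have "of_nat (nat b) * r = of_int a" using b by simp
  then show ?thesis using b by (intro exI[of _ "nat b"]) simp
qed

lemma denom: assumes A: "A \<in> GL2 S"
  shows "\<exists>d::nat. d > 0 \<and> (S = SZ \<longrightarrow> d = 1) \<and> (\<forall>i j. of_nat d * A$i$j \<in> \<int>)"
proof (cases S)
  case SZ then show ?thesis using A by (simp add: GL2_def)
next
  case SQ
  have "\<forall>i j. \<exists>n::nat. n > 0 \<and> of_nat n * A$i$j \<in> \<int>" using rat_denom by blast
  then obtain n where n: "\<And>i j. n i j > 0" "\<And>i j. of_nat (n i j) * A$i$j \<in> \<int>" by metis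
  define d where "d = n 1 1 * n 1 2 * n 2 1 * n 2 2"
  have "of_nat d * A$i$j \<in> \<int>" for i j
  proof -
    have "n i j dvd d"
      using exhaust_2[of i] exhaust_2[of j] by (elim disjE) (simp_all add: d_def)
    then obtain k where "d = k * n i j" by (metis dvd_def mult.commute)
    then have e: "of_nat d * A$i$j = of_nat k * (of_nat (n i j) * A$i$j)" by simp
    show ?thesis unfolding e by (rule Ints_mult[OF Ints_of_nat n(2)])
  qed
  moreover have "d > 0" using n(1) by (simp add: d_def)
  ultimately show ?thesis using SQ by blast
qed

lemma scale_mv: "scale_mat (of_nat k) X *v v = of_nat k *s (X *v v)"
  by (simp add: vec_eq_iff forall_2 matrix_vector_mult_def sum_2 scale_mat_def algebra_simps)
lemma scale_scale: "scale_mat a (scale_mat b X) = scale_mat (a*b) X"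
  by (simp add: scale_mat_def mat2_eq)
lemma scale_one: "scale_mat 1 X = X"
  by (simp add: scale_mat_def mat2_eq)
lemma F_scale: "(A::complex^2^2) ** scale_mat c M ** B = scale_mat c (A ** M ** B)"
  unfolding scale_mat_eq by (simp only: matrix_mul_assoc mat2_comm[of _ A])

lemma End_step:
  fixes B :: "rat^2^2" and P Q :: "int^2^2"
  assumes dB: "det B \<noteq> 0" and d1: "\<forall>i j. of_nat d1 * B$i$j \<in> \<int>"
    and d2: "\<forall>i j. of_nat d2 * matrix_inv B$i$j \<in> \<int>"
    and rel: "int_ratmat Q = (\<chi> i j. inverse (det B) * (B ** int_ratmat P ** transpose B)$i$j)"
    and M: "M \<in> End_Z (mat_scal P \<tau>)"
  shows "scale_mat (of_nat (d1*d2)) (rat_cmat B ** M ** rat_cmat (matrix_inv B)) \<in> End_Z (mat_scal Q \<tau>)"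
proof -
  have relI: "int_ratmat P = (\<chi> i j. inverse (det (matrix_inv B)) * (matrix_inv B ** int_ratmat Q ** transpose (matrix_inv B))$i$j)"
    using rel_inv[OF dB rel] .
  show ?thesis unfolding End_Z_def
  proof (intro CollectI ballI)
    fix v assume v: "v \<in> lattice (mat_scal Q \<tau>)"
    have w: "of_nat d2 *s (rat_cmat (matrix_inv B) *v v) \<in> lattice (mat_scal P \<tau>)"
      by (rule lattice_map[OF det_inv_nz[OF dB] d2 relI v])
    have Mw: "M *v (of_nat d2 *s (rat_cmat (matrix_inv B) *v v)) \<in> lattice (mat_scal P \<tau>)"
      using M w by (simp add: End_Z_def)
    have r: "of_nat d1 *s (rat_cmat B *v (M *v (of_nat d2 *s (rat_cmat (matrix_inv B) *v v)))) \<in> lattice (mat_scal Q \<tau>)"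
      by (rule lattice_map[OF dB d1 rel Mw])
    have "scale_mat (of_nat (d1*d2)) (rat_cmat B ** M ** rat_cmat (matrix_inv B)) *v v
        = of_nat d1 *s (rat_cmat B *v (M *v (of_nat d2 *s (rat_cmat (matrix_inv B) *v v))))"
      unfolding scale_mv by (simp add: vector_scalar_commute matrix_vector_mul_assoc matrix_mul_assoc vector_smult_assoc mult.commute)
    then show "scale_mat (of_nat (d1*d2)) (rat_cmat B ** M ** rat_cmat (matrix_inv B)) *v v \<in> lattice (mat_scal Q \<tau>)"
      using r by simp
  qed
qed

lemma one_dir:
  fixes B :: "rat^2^2" and P Q :: "int^2^2"
  assumes GL: "B \<in> GL2 S"
    and rel: "int_ratmat Q = (\<chi> i j. inverse (det B) * (B ** int_ratmat P ** transpose B)$i$j)"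
    and dP: "det P \<noteq> 0" and dQ: "det Q \<noteq> 0" and t: "Im \<tau> > 0"
  shows "\<forall>M\<in>End_S S (mat_scal P \<tau>). rat_cmat B ** M ** rat_cmat (matrix_inv B) \<in> End_S S (mat_scal Q \<tau>)"
    and "\<forall>M\<in>tensorS S (R_ring (mat_scal P \<tau>)). rat_cmat B ** M ** rat_cmat (matrix_inv B) \<in> tensorS S (R_ring (mat_scal Q \<tau>))"
proof -
  let ?F = "\<lambda>M. rat_cmat B ** M ** rat_cmat (matrix_inv B)"
  have dB: "det B \<noteq> 0" using GL2_det[OF GL] .
  obtain d1 :: nat where d1c: "d1 > 0 \<and> (S = SZ \<longrightarrow> d1 = 1) \<and> (\<forall>i j. of_nat d1 * B$i$j \<in> \<int>)"
    using denom[OF GL] by (elim exE) 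
  note d1 = d1c[THEN conjunct1] d1c[THEN conjunct2, THEN conjunct1] d1c[THEN conjunct2, THEN conjunct2]
  obtain d2 :: nat where d2c: "d2 > 0 \<and> (S = SZ \<longrightarrow> d2 = 1) \<and> (\<forall>i j. of_nat d2 * matrix_inv B$i$j \<in> \<int>)"
    using denom[OF GL2_inv[OF GL]] by (elim exE)
  note d2 = d2c[THEN conjunct1] d2c[THEN conjunct2, THEN conjunct1] d2c[THEN conjunct2, THEN conjunct2]
  have step: "M \<in> End_Z (mat_scal P \<tau>) \<Longrightarrow> scale_mat (of_nat (d1*d2)) (?F M) \<in> End_Z (mat_scal Q \<tau>)" for M
    by (rule End_step[OF dB d1(3) d2(3) rel])
  have cstep: "transpose (cnj_mat M) ** Hmat (mat_scal P \<tau>) = Hmat (mat_scal P \<tau>) ** iota M \<Longrightarrow>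
      transpose (cnj_mat (scale_mat (of_nat m) (?F M))) ** Hmat (mat_scal Q \<tau>) = Hmat (mat_scal Q \<tau>) ** iota (scale_mat (of_nat m) (?F M))" for M m
    unfolding R_char[OF t dP] R_char[OF t dQ]
    by (intro cond_scale R_transfer[OF dB rel])
  have pos: "d1 * d2 > 0" using d1 d2 by simp
  show "\<forall>M\<in>End_S S (mat_scal P \<tau>). ?F M \<in> End_S S (mat_scal Q \<tau>)"
  proof (cases S)
    case SZ
    then show ?thesis using step d1 d2 by (simp add: End_S_def tensorS_def scale_one)
  next
    case SQ
    show ?thesis
    proof
      fix M assume "M \<in> End_S S (mat_scal P \<tau>)"
      then obtain n::nat where n: "n > 0" "scale_mat (of_nat n) M \<in> End_Z (mat_scal P \<tau>)"
        using SQ by (auto simp: End_S_def tensorS_def)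
      have "scale_mat (of_nat (d1*d2)) (?F (scale_mat (of_nat n) M)) \<in> End_Z (mat_scal Q \<tau>)"
        by (rule step[OF n(2)])
      then have "scale_mat (of_nat (d1*d2*n)) (?F M) \<in> End_Z (mat_scal Q \<tau>)"
        by (simp add: F_scale scale_scale)
      then show "?F M \<in> End_S S (mat_scal Q \<tau>)"
        using SQ n pos by (auto simp: End_S_def tensorS_def intro!: exI[of _ "d1*d2*n"])
    qed
  qed
  show "\<forall>M\<in>tensorS S (R_ring (mat_scal P \<tau>)). ?F M \<in> tensorS S (R_ring (mat_scal Q \<tau>))"
  proof (cases S)
    case SZ
    show ?thesis
    proof
      fix M assume "M \<in> tensorS S (R_ring (mat_scal P \<tau>))"
      then have M: "M \<in> End_Z (mat_scal P \<tau>)" "transpose (cnj_mat M) ** Hmat (mat_scal P \<tau>) = Hmat (mat_scal P \<tau>) ** iota M"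
        using SZ by (auto simp: tensorS_def R_ring_def)
      have "?F M \<in> End_Z (mat_scal Q \<tau>)" using step[OF M(1)] SZ d1 d2 by (simp add: scale_one)
      moreover have "transpose (cnj_mat (?F M)) ** Hmat (mat_scal Q \<tau>) = Hmat (mat_scal Q \<tau>) ** iota (?F M)"
        using cstep[OF M(2), of 1] by (simp add: scale_one)
      ultimately show "?F M \<in> tensorS S (R_ring (mat_scal Q \<tau>))"
        using SZ by (simp add: tensorS_def R_ring_def)
    qed
  next
    case SQ
    show ?thesis
    proof
      fix M assume "M \<in> tensorS S (R_ring (mat_scal P \<tau>))"
      then obtain n::nat where n: "n > 0" "scale_mat (of_nat n) M \<in> End_Z (mat_scal P \<tau>)"
        "transpose (cnj_mat (scale_mat (of_nat n) M)) ** Hmat (mat_scal P \<tau>) = Hmat (mat_scal P \<tau>) ** iota (scale_mat (of_nat n) M)"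
        using SQ by (auto simp: tensorS_def R_ring_def)
      have "scale_mat (of_nat (d1*d2)) (?F (scale_mat (of_nat n) M)) \<in> End_Z (mat_scal Q \<tau>)"
        by (rule step[OF n(2)])
      then have E: "scale_mat (of_nat (d1*d2*n)) (?F M) \<in> End_Z (mat_scal Q \<tau>)"
        by (simp add: F_scale scale_scale)
      have "transpose (cnj_mat (scale_mat (of_nat (d1*d2)) (?F (scale_mat (of_nat n) M)))) ** Hmat (mat_scal Q \<tau>)
          = Hmat (mat_scal Q \<tau>) ** iota (scale_mat (of_nat (d1*d2)) (?F (scale_mat (of_nat n) M)))"
        by (rule cstep[OF n(3)])
      then have C: "transpose (cnj_mat (scale_mat (of_nat (d1*d2*n)) (?F M))) ** Hmat (mat_scal Q \<tau>)
          = Hmat (mat_scal Q \<tau>) ** iota (scale_mat (of_nat (d1*d2*n)) (?F M))"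
        by (simp add: F_scale scale_scale)
      show "?F M \<in> tensorS S (R_ring (mat_scal Q \<tau>))"
        using SQ E C n pos by (auto simp: tensorS_def R_ring_def intro!: exI[of _ "d1*d2*n"])
    qed
  qed
qed

theorem mainTheorem9:
  fixes N :: nat and \<tau> :: complex and Q1 Q2 :: "int^2^2"
    and S :: coeff_ring and A :: "rat^2^2"
  assumes "prime N"
    and "Im \<tau> > 0"
    and "sym_pos_def Q1" and "sym_pos_def Q2"
    and "det Q1 = int N" and "det Q2 = int N"
    and "A \<in> GL2 S"
    and "int_ratmat Q2 = (\<chi> i j. inverse (det A) * (A ** int_ratmat Q1 ** transpose A)$i$j)"
  shows "S_alg_iso S (\<lambda>M. rat_cmat A ** M ** rat_cmat (matrix_inv A))
           (End_S S (mat_scal Q1 \<tau>)) (End_S S (mat_scal Q2 \<tau>))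
       \<and> S_alg_iso S (\<lambda>M. rat_cmat A ** M ** rat_cmat (matrix_inv A))
           (tensorS S (R_ring (mat_scal Q1 \<tau>))) (tensorS S (R_ring (mat_scal Q2 \<tau>)))"
proof -
  have N0: "N \<noteq> 0" using assms(1) by auto
  have d1: "det Q1 \<noteq> 0" and d2: "det Q2 \<noteq> 0" using assms(5,6) N0 by simp_all
  have dA: "det A \<noteq> 0" using GL2_det[OF assms(7)] .
  have GLi: "matrix_inv A \<in> GL2 S" using GL2_inv[OF assms(7)] .
  have relI: "int_ratmat Q1 = (\<chi> i j. inverse (det (matrix_inv A)) * (matrix_inv A ** int_ratmat Q2 ** transpose (matrix_inv A))$i$j)"
    using rel_inv[OF dA assms(8)] .
  note f = one_dir[OF assms(7) assms(8) d1 d2 assms(2)]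
  note g = one_dir[OF GLi relI d2 d1 assms(2), unfolded inv_inv[OF dA]]
  show ?thesis
    by (intro conjI iso_general[OF dA] f g)
qed
end
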